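(* There exists a computable (2,1):1 structure $\mathcal{A}=(\omega,f)$ such that $\beta_{\mathcal{A}}$ is computable but $iso_{\mathcal{A}}$ is not computable (i.e. there is no partial computable function $\varphi$ with $\varphi(x)=iso_{\mathcal{A}}(x)$ for all $x\in\Lambda_{\mathcal{A}}$).
   Context: A (2,1):1 structure is a pair $\mathcal{A}=(A,f)$ with $A$ a countable set and $f:A\to A$ such that $|f^{-1}(a)|\in\{1,2\}$ for every $a\in A$; it is computable if $A$ is a computable set and $f$ is computable. The branching function is $\beta_{\mathcal{A}}(x)=|f^{-1}(x)|\in\{1,2\}$, and $\Lambda_{\mathcal{A}}=\{x:\beta_{\mathcal{A}}(x)=2\}$. For $x\in A$, $Tree_{\mathcal{A}}(x)$ is the directed graph with vertex set $\{a:\exists n\ge0\,(f^n(a)=x)\}$ and edges $(a,f(a))$ for $a$, $f(a)$ both in this set. The branch isomorphism function $iso_{\mathcal{A}}:\Lambda_{\mathcal{A}}\to\{0,1\}$ is defined, for $x\in\Lambda_{\mathcal{A}}$ with distinct pre-images $x_1,x_2$, by $iso_{\mathcal{A}}(x)=1$ if $Tree_{\mathcal{A}}(x_1)\cong Tree_{\mathcal{A}}(x_2)$ and $iso_{\mathcal{A}}(x)=0$ otherwise. *)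

theory Defs
  imports Main
begin

datatype recf = Zero | Succ | Proj nat | Comp recf "recf list" | Prim recf recf | Mn recf

inductive eval :: "recf \<Rightarrow> nat list \<Rightarrow> nat \<Rightarrow> bool" where
  zero: "eval Zero xs 0"
| succ: "eval Succ (x # xs) (Suc x)"
| proj: "i < length xs \<Longrightarrow> eval (Proj i) xs (xs ! i)"
| comp: "list_all2 (\<lambda>g y. eval g xs y) gs ys \<Longrightarrow> eval f ys z \<Longrightarrow> eval (Comp f gs) xs z"
| prim0: "eval f xs y \<Longrightarrow> eval (Prim f g) (0 # xs) y"
| primS: "eval (Prim f g) (n # xs) y \<Longrightarrow> eval g (n # y # xs) z \<Longrightarrow> eval (Prim f g) (Suc n # xs) z"
| mn: "eval f (n # xs) 0 \<Longrightarrow> (\<forall>m<n. \<exists>y. eval f (m # xs) (Suc y)) \<Longrightarrow> eval (Mn f) xs n"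
monos list_all2_mono

definition computable1 :: "(nat \<Rightarrow> nat) \<Rightarrow> bool" where
  "computable1 h \<longleftrightarrow> (\<exists>r. \<forall>x. eval r [x] (h x))"

definition is_21_structure :: "(nat \<Rightarrow> nat) \<Rightarrow> bool" where
  "is_21_structure f \<longleftrightarrow> (\<forall>a. card (f -` {a}) \<in> {1, 2})"

definition branching :: "(nat \<Rightarrow> nat) \<Rightarrow> nat \<Rightarrow> nat" where
  "branching f x = card (f -` {x})"

definition Lambda :: "(nat \<Rightarrow> nat) \<Rightarrow> nat set" where
  "Lambda f = {x. branching f x = 2}"

definition tree_verts :: "(nat \<Rightarrow> nat) \<Rightarrow> nat \<Rightarrow> nat set" where
  "tree_verts f x = {a. \<exists>n. (f ^^ n) a = x}"

definition tree_edges :: "(nat \<Rightarrow> nat) \<Rightarrow> nat \<Rightarrow> (nat \<times> nat) set" where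
  "tree_edges f x = {(a, f a) | a. a \<in> tree_verts f x \<and> f a \<in> tree_verts f x}"

definition tree_iso :: "(nat \<Rightarrow> nat) \<Rightarrow> nat \<Rightarrow> nat \<Rightarrow> bool" where
  "tree_iso f x y \<longleftrightarrow> (\<exists>h. bij_betw h (tree_verts f x) (tree_verts f y) \<and>
     (\<forall>a\<in>tree_verts f x. \<forall>b\<in>tree_verts f x.
        (a, b) \<in> tree_edges f x \<longleftrightarrow> (h a, h b) \<in> tree_edges f y))"

text \<open>Branch isomorphism function (meaningful on Lambda f, where there are exactly two pre-images).\<close>
definition iso_fun :: "(nat \<Rightarrow> nat) \<Rightarrow> nat \<Rightarrow> nat" where
  "iso_fun f x = (if \<exists>x1 x2. x1 \<noteq> x2 \<and> f x1 = x \<and> f x2 = x \<and> tree_iso f x1 x2 then 1 else 0)"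

end

theory Submission
  imports Defs "HOL-Library.Nat_Bijection"
begin


fun peval :: "recf \<Rightarrow> nat list \<Rightarrow> nat" where
  "peval Zero xs = 0"
| "peval Succ xs = Suc (hd xs)"
| "peval (Proj i) xs = xs ! i"
| "peval (Comp f gs) xs = peval f (map (\<lambda>g. peval g xs) gs)"
| "peval (Prim f g) xs = (case xs of [] \<Rightarrow> 0 | n # ys \<Rightarrow> rec_nat (peval f ys) (\<lambda>k acc. peval g (k # acc # ys)) n)"
| "peval (Mn f) xs = 0"

fun pr :: "recf \<Rightarrow> nat \<Rightarrow> bool" where
  "pr Zero n = True"
| "pr Succ n = (1 \<le> n)"
| "pr (Proj i) n = (i < n)"
| "pr (Comp f gs) n = (pr f (length gs) \<and> (\<forall>g\<in>set gs. pr g n))"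
| "pr (Prim f g) n = (1 \<le> n \<and> pr f (n - 1) \<and> pr g (n + 1))"
| "pr (Mn f) n = False"

lemma peval_eval: "pr r n \<Longrightarrow> n \<le> length xs \<Longrightarrow> eval r xs (peval r xs)"
proof (induction r arbitrary: n xs)
  case Zero then show ?case by (auto intro: eval.intros)
next
  case Succ then show ?case by (cases xs) (auto intro: eval.intros)
next
  case (Proj i) then show ?case by (auto intro: eval.intros)
next
  case (Comp f gs)
  have "list_all2 (\<lambda>g y. eval g xs y) gs (map (\<lambda>g. peval g xs) gs)"
    using Comp by (auto simp: list_all2_conv_all_nth intro!: Comp.IH(2) nth_mem)
  moreover have "eval f (map (\<lambda>g. peval g xs) gs) (peval f (map (\<lambda>g. peval g xs) gs))"
    using Comp by auto
  ultimately show ?case by (auto intro: eval.comp)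
next
  case (Prim f g)
  then obtain m ys where xs: "xs = m # ys" by (cases xs) auto
  have "eval (Prim f g) (k # ys) (peval (Prim f g) (k # ys))" for k
  proof (induction k)
    case 0 then show ?case using Prim xs by (auto intro: eval.prim0)
  next
    case (Suc k)
    have "eval g (k # peval (Prim f g) (k # ys) # ys) (peval g (k # peval (Prim f g) (k # ys) # ys))"
      using Prim xs by (intro Prim.IH(2)[of "n+1"]) auto
    then show ?case using Suc by (auto intro: eval.primS)
  qed
  then show ?case using xs by simp
next
  case (Mn f) then show ?case by simp
qed


inductive_cases eval_ZeroE: "eval Zero xs y"
inductive_cases eval_SuccE: "eval Succ xs y"
inductive_cases eval_ProjE: "eval (Proj i) xs y"
inductive_cases eval_CompE: "eval (Comp f gs) xs y"
inductive_cases eval_PrimE: "eval (Prim f g) xs y"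
inductive_cases eval_Prim0E: "eval (Prim f g) (0 # xs) y"
inductive_cases eval_PrimSE: "eval (Prim f g) (Suc n # xs) y"
inductive_cases eval_MnE: "eval (Mn f) xs y"

lemma eval_det0: "eval r xs y \<Longrightarrow> \<forall>z. eval r xs z \<longrightarrow> y = z"
proof (induction r xs y rule: eval.induct)
  case (zero xs) then show ?case by (auto elim: eval_ZeroE)
next
  case (succ x xs) then show ?case by (auto elim: eval_SuccE)
next
  case (proj i xs) then show ?case by (auto elim: eval_ProjE)
next
  case (comp xs gs ys f z)
  show ?case
  proof (intro allI impI)
    fix z' assume "eval (Comp f gs) xs z'"
    then obtain ys' where a: "list_all2 (\<lambda>g y. eval g xs y) gs ys'" and b: "eval f ys' z'"
      by (rule eval_CompE)
    have h: "list_all2 (\<lambda>g y. eval g xs y \<and> (\<forall>z. eval g xs z \<longrightarrow> y = z)) gs ys"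
      using comp(1) .
    have l: "length ys = length ys'" using list_all2_lengthD[OF h] list_all2_lengthD[OF a] by simp
    have "ys ! i = ys' ! i" if "i < length ys" for i
    proof -
      have "i < length gs" using that list_all2_lengthD[OF h] by simp
      then show ?thesis using list_all2_nthD[OF h] list_all2_nthD[OF a] by blast
    qed
    then have "ys = ys'" using l by (simp add: nth_equalityI)
    then show "z = z'" using comp(2) b by blast
  qed
next
  case (prim0 f xs y g)
  show ?case
  proof (intro allI impI)
    fix z assume "eval (Prim f g) (0 # xs) z"
    then show "y = z"
      by (rule eval_Prim0E) (use prim0 in blast)
  qed
next
  case (primS f g n xs y z)
  show ?case
  proof (intro allI impI)
    fix z' assume "eval (Prim f g) (Suc n # xs) z'"
    then obtain y' where "eval (Prim f g) (n # xs) y'" "eval g (n # y' # xs) z'"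
      by (rule eval_PrimSE) blast
    then show "z = z'" using primS by metis
  qed
next
  case (mn f n xs)
  show ?case
  proof (intro allI impI)
    fix z assume "eval (Mn f) xs z"
    then have a: "eval f (z # xs) 0" "\<forall>m<z. \<exists>y. eval f (m # xs) (Suc y)"
      by (rule eval_MnE, auto)+
    show "n = z"
    proof (rule ccontr)
      assume "n \<noteq> z"
      then consider "n < z" | "z < n" by linarith
      then show False
      proof cases
        case 1 then obtain y where "eval f (n # xs) (Suc y)" using a by auto
        then show False using mn(2) by force
      next
        case 2 then obtain y where "eval f (z # xs) (Suc y)" "\<forall>w. eval f (z # xs) w \<longrightarrow> Suc y = w"
          using mn(3) by blast
        then show False using a(1) by force
      qed
    qed
  qed
qed

lemmas eval_det = eval_det0[rule_format]


lemma peval_Prim_Cons: "peval (Prim f g) (0 # ys) = peval f ys"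
  "peval (Prim f g) (Suc n # ys) = peval g (n # peval (Prim f g) (n # ys) # ys)"
  by simp_all

declare peval.simps(5)[simp del]

primrec rc :: "nat \<Rightarrow> recf" where
  "rc 0 = Zero" | "rc (Suc k) = Comp Succ [rc k]"
lemma rc[simp]: "peval (rc k) xs = k" "pr (rc k) n"
  by (induction k) auto

definition "S1 g = Comp Succ [g]"
lemma S1[simp]: "peval (S1 g) xs = Suc (peval g xs)" "pr (S1 g) n = pr g n"
  by (auto simp: S1_def)

definition "r_add = Prim (Proj 0) (Comp Succ [Proj 1])"
lemma r_add[simp]: "peval r_add [a, b] = a + b" "pr r_add (Suc (Suc 0))"
  by (induction a) (auto simp: r_add_def peval_Prim_Cons)
definition "ADD g h = Comp r_add [g, h]"
lemma ADD[simp]: "peval (ADD g h) xs = peval g xs + peval h xs" "pr (ADD g h) n = (pr g n \<and> pr h n)"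
  by (auto simp: ADD_def)

definition "r_mul = Prim Zero (ADD (Proj 1) (Proj 2))"
lemma r_mul[simp]: "peval r_mul [a, b] = a * b" "pr r_mul (Suc (Suc 0))"
  by (induction a) (auto simp: r_mul_def peval_Prim_Cons)
definition "MUL g h = Comp r_mul [g, h]"
lemma MUL[simp]: "peval (MUL g h) xs = peval g xs * peval h xs" "pr (MUL g h) n = (pr g n \<and> pr h n)"
  by (auto simp: MUL_def)

definition "r_pred = Prim Zero (Proj 0)"
lemma r_pred[simp]: "peval r_pred [a] = a - 1" "pr r_pred (Suc 0)"
  by (cases a) (auto simp: r_pred_def peval_Prim_Cons)
definition "r_sub = Prim (Proj 0) (Comp r_pred [Proj 1])"
lemma r_sub[simp]: "peval r_sub [b, a] = a - b" "pr r_sub (Suc (Suc 0))"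
  by (induction b) (auto simp: r_sub_def peval_Prim_Cons)
definition "SUB g h = Comp r_sub [h, g]"
lemma SUB[simp]: "peval (SUB g h) xs = peval g xs - peval h xs" "pr (SUB g h) n = (pr g n \<and> pr h n)"
  by (auto simp: SUB_def)

definition "r_sg = Prim Zero (rc 1)"
lemma r_sg[simp]: "peval r_sg [a] = (if a = 0 then 0 else 1)" "pr r_sg (Suc 0)"
  by (cases a) (auto simp: r_sg_def peval_Prim_Cons)
definition "r_nsg = Prim (rc 1) Zero"
lemma r_nsg[simp]: "peval r_nsg [a] = (if a = 0 then 1 else 0)" "pr r_nsg (Suc 0)"
  by (cases a) (auto simp: r_nsg_def peval_Prim_Cons)
definition "SG g = Comp r_sg [g]"
lemma SG[simp]: "peval (SG g) xs = (if peval g xs = 0 then 0 else 1)" "pr (SG g) n = pr g n"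
  by (auto simp: SG_def)
definition "NSG g = Comp r_nsg [g]"
lemma NSG[simp]: "peval (NSG g) xs = (if peval g xs = 0 then 1 else 0)" "pr (NSG g) n = pr g n"
  by (auto simp: NSG_def)

definition "EQ g h = NSG (ADD (SUB g h) (SUB h g))"
lemma EQ[simp]: "peval (EQ g h) xs = (if peval g xs = peval h xs then 1 else 0)" "pr (EQ g h) n = (pr g n \<and> pr h n)"
  by (auto simp: EQ_def)
definition "LT g h = SG (SUB h g)"
lemma LT[simp]: "peval (LT g h) xs = (if peval g xs < peval h xs then 1 else 0)" "pr (LT g h) n = (pr g n \<and> pr h n)"
  by (auto simp: LT_def)
definition "AND g h = MUL (SG g) (SG h)"
lemma AND[simp]: "peval (AND g h) xs = (if peval g xs \<noteq> 0 \<and> peval h xs \<noteq> 0 then 1 else 0)" "pr (AND g h) n = (pr g n \<and> pr h n)"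
  by (auto simp: AND_def)
definition "OR g h = SG (ADD g h)"
lemma OR[simp]: "peval (OR g h) xs = (if peval g xs \<noteq> 0 \<or> peval h xs \<noteq> 0 then 1 else 0)" "pr (OR g h) n = (pr g n \<and> pr h n)"
  by (auto simp: OR_def)
definition "IF c a b = ADD (MUL (SG c) a) (MUL (NSG c) b)"
lemma IF[simp]: "peval (IF c a b) xs = (if peval c xs \<noteq> 0 then peval a xs else peval b xs)" "pr (IF c a b) n = (pr c n \<and> pr a n \<and> pr b n)"
  by (auto simp: IF_def)

definition shp :: "nat \<Rightarrow> nat \<Rightarrow> recf list" where "shp k n = map (\<lambda>i. Proj (i + k)) [0..<n]"

lemma length_shp[simp]: "length (shp k n) = n" by (simp add: shp_def)

lemma map_shp: "length xs = n \<Longrightarrow> map (\<lambda>g. peval g (ys @ xs)) (shp (length ys) n) = xs"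
  by (auto simp: shp_def intro!: nth_equalityI simp: nth_append)
lemma map_shp0: "length xs = n \<Longrightarrow> map (\<lambda>g. peval g xs) (shp 0 n) = xs"
  using map_shp[of xs n "[]"] by simp
lemma map_shp1: "length xs = n \<Longrightarrow> map (\<lambda>g. peval g (a # xs)) (shp (Suc 0) n) = xs"
  using map_shp[of xs n "[a]"] by simp
lemma map_shp2: "length xs = n \<Longrightarrow> map (\<lambda>g. peval g (a # b # xs)) (shp (Suc (Suc 0)) n) = xs"
  using map_shp[of xs n "[a,b]"] by (simp add: numeral_2_eq_2)
lemma pr_shp: "g \<in> set (shp k n) \<Longrightarrow> m \<ge> n + k \<Longrightarrow> pr g m"
  by (auto simp: shp_def)

definition BSUM :: "nat \<Rightarrow> recf \<Rightarrow> recf \<Rightarrow> recf" where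
  "BSUM n b p = Comp (Prim Zero (ADD (Proj 1) (Comp p (Proj 0 # shp (Suc (Suc 0)) n)))) (b # shp 0 n)"

lemma BSUM: assumes "length xs = n"
  shows "peval (BSUM n b p) xs = (\<Sum>j<peval b xs. peval p (j # xs))"
proof -
  have "peval (Prim Zero (ADD (Proj 1) (Comp p (Proj 0 # shp (Suc (Suc 0)) n)))) (k # xs) = (\<Sum>j<k. peval p (j # xs))" for k
    by (induction k) (auto simp: peval_Prim_Cons map_shp2 assms)
  then show ?thesis by (simp add: BSUM_def map_shp0 assms)
qed

lemma pr_BSUM: "pr b n \<Longrightarrow> pr p (Suc n) \<Longrightarrow> pr (BSUM n b p) n"
  by (auto simp: BSUM_def intro: pr_shp)

definition "BEX n b p = SG (BSUM n b p)"
lemma BEX: "length xs = n \<Longrightarrow> peval (BEX n b p) xs = (if \<exists>j<peval b xs. peval p (j # xs) \<noteq> 0 then 1 else 0)"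
  by (auto simp: BEX_def BSUM)
lemma pr_BEX: "pr b n \<Longrightarrow> pr p (Suc n) \<Longrightarrow> pr (BEX n b p) n"
  by (auto simp: BEX_def pr_BSUM)
definition "BALL n b p = NSG (BSUM n b (NSG p))"
lemma BALL: "length xs = n \<Longrightarrow> peval (BALL n b p) xs = (if \<forall>j<peval b xs. peval p (j # xs) \<noteq> 0 then 1 else 0)"
  by (auto simp: BALL_def BSUM)
lemma pr_BALL: "pr b n \<Longrightarrow> pr p (Suc n) \<Longrightarrow> pr (BALL n b p) n"
  by (auto simp: BALL_def pr_BSUM)

definition BMIN :: "nat \<Rightarrow> recf \<Rightarrow> recf \<Rightarrow> recf" where
  "BMIN n b p = Comp (Prim Zero (IF (LT (Proj 1) (Proj 0)) (Proj 1)
      (IF (Comp p (Proj 0 # shp (Suc (Suc 0)) n)) (Proj 0) (S1 (Proj 0))))) (b # shp 0 n)"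

lemma BMIN: assumes "length xs = n"
  shows "peval (BMIN n b p) xs = (if \<exists>j<peval b xs. peval p (j # xs) \<noteq> 0
     then (LEAST j. peval p (j # xs) \<noteq> 0) else peval b xs)"
proof -
  let ?P = "\<lambda>j. peval p (j # xs) \<noteq> 0"
  have "peval (Prim Zero (IF (LT (Proj 1) (Proj 0)) (Proj 1)
      (IF (Comp p (Proj 0 # shp (Suc (Suc 0)) n)) (Proj 0) (S1 (Proj 0))))) (k # xs) =
     (if \<exists>j<k. ?P j then (LEAST j. ?P j) else k)" for k
  proof (induction k)
    case 0 then show ?case by (simp add: peval_Prim_Cons)
  next
    case (Suc k)
    show ?case
    proof (cases "\<exists>j<k. ?P j")
      case True
      then have "(LEAST j. ?P j) < k" by (meson Least_le order.strict_trans1)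
      moreover have "\<exists>j<Suc k. ?P j" using True less_Suc_eq by blast
      ultimately show ?thesis using Suc True by (simp add: peval_Prim_Cons)
    next
      case False
      then have "?P k \<Longrightarrow> (LEAST j. ?P j) = k"
        by (metis (mono_tags, lifting) LeastI_ex linorder_neqE_nat not_less_Least)
      then show ?thesis using Suc False
        by (auto simp: peval_Prim_Cons map_shp2 assms less_Suc_eq)
    qed
  qed
  then show ?thesis by (simp add: BMIN_def map_shp0 assms)
qed

lemma pr_BMIN: "pr b n \<Longrightarrow> pr p (Suc n) \<Longrightarrow> pr (BMIN n b p) n"
  by (auto simp: BMIN_def intro: pr_shp)

definition "r_iter h = Prim (Proj 0) (Comp h [Proj 1])"
lemma r_iter: "peval (r_iter h) [k, x] = ((\<lambda>v. peval h [v]) ^^ k) x"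
  by (induction k) (auto simp: r_iter_def peval_Prim_Cons)
lemma pr_r_iter: "pr h 1 \<Longrightarrow> pr (r_iter h) 2"
  by (auto simp: r_iter_def)


definition pf :: "nat \<Rightarrow> nat" where "pf p = fst (prod_decode p)"
definition ps :: "nat \<Rightarrow> nat" where "ps p = snd (prod_decode p)"
definition pair :: "nat \<Rightarrow> nat \<Rightarrow> nat" where "pair a b = prod_encode (a, b)"

lemma pf_pair[simp]: "pf (pair a b) = a" and ps_pair[simp]: "ps (pair a b) = b"
  by (simp_all add: pf_def ps_def pair_def)
lemma pf_pe[simp]: "pf (prod_encode (a, b)) = a" and ps_pe[simp]: "ps (prod_encode (a, b)) = b"
  by (simp_all add: pf_def ps_def)
lemma pair_pf_ps[simp]: "pair (pf p) (ps p) = p"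
  by (simp add: pf_def ps_def pair_def)
lemma pair_eq[simp]: "pair a b = pair c d \<longleftrightarrow> a = c \<and> b = d"
  by (simp add: pair_def)
lemma ps_le: "ps p \<le> p"
  using le_prod_encode_2[of "snd (prod_decode p)" "fst (prod_decode p)"] by (simp add: ps_def)
lemma pf_le: "pf p \<le> p"
  using le_prod_encode_1[of "fst (prod_decode p)" "snd (prod_decode p)"] by (simp add: pf_def)
lemma p_tri: "p = triangle (pf p + ps p) + pf p"
proof -
  have "p = prod_encode (pf p, ps p)" by (simp add: pf_def ps_def)
  then show ?thesis by (simp add: prod_encode_def)
qed
lemma ps_less: "pf p \<noteq> 0 \<Longrightarrow> ps p < p"
proof -
  assume "pf p \<noteq> 0"
  have "p = triangle (pf p + ps p) + pf p" by (rule p_tri)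
  moreover have "ps p \<le> triangle (pf p + ps p)"
  proof -
    have "n \<le> triangle n" for n by (induction n) auto
    then show ?thesis by (meson le_add2 le_trans)
  qed
  ultimately show ?thesis using \<open>pf p \<noteq> 0\<close> by linarith
qed
lemma pf_less: "ps p \<noteq> 0 \<Longrightarrow> pf p < p"
proof -
  assume "ps p \<noteq> 0"
  have "p = triangle (pf p + ps p) + pf p" by (rule p_tri)
  moreover have "triangle (pf p + ps p) > 0" using \<open>ps p \<noteq> 0\<close>
    by (cases "pf p + ps p") auto
  ultimately show ?thesis by linarith
qed

definition "hdc x = pf (x - 1)"
definition "tlc x = ps (x - 1)"
definition "consc a l = Suc (pair a l)"

lemma list_decode_nz: "x \<noteq> 0 \<Longrightarrow> list_decode x = hdc x # list_decode (tlc x)"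
  by (cases x) (auto simp: hdc_def tlc_def pf_def ps_def split: prod.split)
lemma list_decode_consc[simp]: "list_decode (consc a l) = a # list_decode l"
  by (simp add: consc_def pair_def)
lemma list_encode_Cons: "list_encode (a # xs) = consc a (list_encode xs)"
  by (simp add: consc_def pair_def)
lemma consc_nz[simp]: "consc a l \<noteq> 0" by (simp add: consc_def)
lemma hdc_consc[simp]: "hdc (consc a l) = a" and tlc_consc[simp]: "tlc (consc a l) = l"
  by (simp_all add: hdc_def tlc_def consc_def)

lemma list_decode_less: "x \<in> set (list_decode n) \<Longrightarrow> x < n"
proof (induction n rule: list_decode.induct)
  case 1 then show ?case by simp
next
  case (2 n)
  obtain a b where ab: "prod_decode n = (a, b)" by fastforce
  then have "n = prod_encode (a, b)" by (metis prod_decode_inverse)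
  then have "a \<le> n" "b \<le> n" using le_prod_encode_1 le_prod_encode_2 by auto
  with 2 ab show ?case by auto
qed

fun enc :: "recf \<Rightarrow> nat" where
  "enc Zero = pair 0 0"
| "enc Succ = pair 1 0"
| "enc (Proj i) = pair 2 i"
| "enc (Comp f gs) = pair 3 (pair (enc f) (list_encode (map enc gs)))"
| "enc (Prim f g) = pair 4 (pair (enc f) (enc g))"
| "enc (Mn f) = pair 5 (enc f)"

function dec :: "nat \<Rightarrow> recf" where
  "dec c = (if pf c = 0 then Zero else if pf c = 1 then Succ else if pf c = 2 then Proj (ps c)
     else if pf c = 3 then Comp (dec (pf (ps c))) (map dec (list_decode (ps (ps c))))
     else if pf c = 4 then Prim (dec (pf (ps c))) (dec (ps (ps c)))
     else if pf c = 5 then Mn (dec (ps c)) else Zero)"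
  by pat_completeness auto
lemma dec_term1: "pf c \<noteq> 0 \<Longrightarrow> pf (ps c) < c" using pf_le[of "ps c"] ps_less[of c] by simp
lemma dec_term2: "pf c \<noteq> 0 \<Longrightarrow> ps (ps c) < c" using ps_le[of "ps c"] ps_less[of c] by simp
lemma dec_term3: "pf c \<noteq> 0 \<Longrightarrow> x \<in> set (list_decode (ps (ps c))) \<Longrightarrow> x < c"
  using list_decode_less[of x "ps (ps c)"] dec_term2[of c] by simp
termination
  by (relation "measure id") (auto intro: dec_term1 dec_term2 dec_term3 ps_less)

declare dec.simps[simp del]

lemma dec_enc[simp]: "dec (enc r) = r"
  by (induction r) (subst dec.simps; simp add: map_idI)+


definition "ec q = pf q"
definition "ex q = pf (ps q)"
definition "ey q = pf (ps (ps q))"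
definition "ew q = ps (ps (ps q))"
definition "mkent c x y w = pair c (pair x (pair y w))"
lemma ent_simps[simp]: "ec (mkent c x y w) = c" "ex (mkent c x y w) = x" "ey (mkent c x y w) = y" "ew (mkent c x y w) = w"
  by (simp_all add: ec_def ex_def ey_def ew_def mkent_def)

definition "has L i c x y = (\<exists>k<i. ec (L!k) = c \<and> ex (L!k) = x \<and> ey (L!k) = y)"
definition "haspos L i c x = (\<exists>k<i. ec (L!k) = c \<and> ex (L!k) = x \<and> 0 < ey (L!k))"
definition "lenc x = length (list_decode x)"
definition "nthc x j = hdc ((tlc ^^ j) x)"

lemma ps0: "ps 0 = 0"
proof -
  have "pair 0 0 = 0" by (simp add: pair_def prod_encode_def)
  then show ?thesis using ps_pair[of 0 0] by simp
qed
lemma tlc_enc: "tlc (list_encode (a # xs)) = list_encode xs" "tlc (list_encode []) = list_encode []"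
  by (simp_all add: list_encode_Cons tlc_def ps0)
lemma tlpow_enc: "(tlc ^^ j) (list_encode xs) = list_encode (drop j xs)"
proof (induction j arbitrary: xs)
  case 0 then show ?case by simp
next
  case (Suc j)
  have e: "(tlc ^^ Suc j) (list_encode xs) = (tlc ^^ j) (tlc (list_encode xs))"
    by (simp only: funpow_Suc_right o_apply)
  show ?case
  proof (cases xs)
    case Nil then show ?thesis using e Suc[of "[]"] tlc_enc(2) by simp
  next
    case (Cons a ys) then show ?thesis using e Suc[of ys] tlc_enc(1)[of a ys] by simp
  qed
qed
lemma nthc_enc: "j < length xs \<Longrightarrow> nthc (list_encode xs) j = xs ! j"
  by (simp add: nthc_def tlpow_enc Cons_nth_drop_Suc[symmetric] hdc_def)
lemma nthc_correct: "j < lenc x \<Longrightarrow> nthc x j = list_decode x ! j"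
  using nthc_enc[of j "list_decode x"] by (simp add: lenc_def)

definition justq :: "nat list \<Rightarrow> nat \<Rightarrow> nat \<Rightarrow> nat \<Rightarrow> nat \<Rightarrow> nat \<Rightarrow> bool" where
 "justq L i c x y w =
 ((pf c = 0 \<and> y = 0) \<or>
 (pf c = 1 \<and> x \<noteq> 0 \<and> y = Suc (hdc x)) \<or>
 (pf c = 2 \<and> ps c < lenc x \<and> y = nthc x (ps c)) \<or>
 (pf c = 3 \<and> lenc w = lenc (ps (ps c)) \<and> (\<forall>j<lenc (ps (ps c)). has L i (nthc (ps (ps c)) j) x (nthc w j)) \<and> has L i (pf (ps c)) w y) \<or>
 (pf c = 4 \<and> x \<noteq> 0 \<and> hdc x = 0 \<and> has L i (pf (ps c)) (tlc x) y) \<or>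
 (pf c = 4 \<and> x \<noteq> 0 \<and> hdc x \<noteq> 0 \<and> has L i c (consc (hdc x - 1) (tlc x)) w \<and> has L i (ps (ps c)) (consc (hdc x - 1) (consc w (tlc x))) y) \<or>
 (pf c = 5 \<and> has L i (ps c) (consc y x) 0 \<and> (\<forall>m<y. haspos L i (ps c) (consc m x))))"

definition "just L i = justq L i (ec (L!i)) (ex (L!i)) (ey (L!i)) (ew (L!i))"
definition "valid L = (\<forall>i<length L. just L i)"

lemma dec_cases:
  "pf c = 0 \<Longrightarrow> dec c = Zero"
  "pf c = 1 \<Longrightarrow> dec c = Succ"
  "pf c = 2 \<Longrightarrow> dec c = Proj (ps c)"
  "pf c = 3 \<Longrightarrow> dec c = Comp (dec (pf (ps c))) (map dec (list_decode (ps (ps c))))"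
  "pf c = 4 \<Longrightarrow> dec c = Prim (dec (pf (ps c))) (dec (ps (ps c)))"
  "pf c = 5 \<Longrightarrow> dec c = Mn (dec (ps c))"
  by (subst dec.simps; simp)+

lemma sound_aux:
  assumes "valid L"
  shows "i < length L \<Longrightarrow> eval (dec (ec (L!i))) (list_decode (ex (L!i))) (ey (L!i))"
proof (induction i rule: less_induct)
  case (less i)
  have H: "eval (dec c) (list_decode x) y" if "has L i c x y" for c x y
    using that less by (auto simp: has_def)
  have HP: "\<exists>y. eval (dec c) (list_decode x) (Suc y)" if "haspos L i c x" for c x
    using that less by (auto simp: haspos_def) (metis Suc_pred)
  define c where "c = ec (L!i)"
  define x where "x = ex (L!i)"
  define y where "y = ey (L!i)"
  define w where "w = ew (L!i)"
  have J: "justq L i c x y w" using assms less.prems by (simp add: valid_def just_def c_def x_def y_def w_def)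
  have "eval (dec c) (list_decode x) y"
    using J unfolding justq_def
  proof (elim disjE conjE)
    assume "pf c = 0" "y = 0" then show ?thesis by (simp add: dec_cases eval.zero)
  next
    assume "pf c = 1" "x \<noteq> 0" "y = Suc (hdc x)"
    then show ?thesis by (simp add: dec_cases list_decode_nz eval.succ)
  next
    assume "pf c = 2" "ps c < lenc x" "y = nthc x (ps c)"
    then show ?thesis by (simp add: dec_cases nthc_correct) (simp add: lenc_def eval.proj)
  next
    assume a: "pf c = 3" "lenc w = lenc (ps (ps c))"
      "\<forall>j<lenc (ps (ps c)). has L i (nthc (ps (ps c)) j) x (nthc w j)" "has L i (pf (ps c)) w y"
    have "list_all2 (\<lambda>g y. eval g (list_decode x) y) (map dec (list_decode (ps (ps c)))) (list_decode w)"
      using a(2,3) H by (auto simp: list_all2_conv_all_nth nthc_correct) (auto simp: lenc_def)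
    moreover have "eval (dec (pf (ps c))) (list_decode w) y" using a(4) H by blast
    ultimately show ?thesis using a(1) by (simp add: dec_cases eval.comp)
  next
    assume a: "pf c = 4" "x \<noteq> 0" "hdc x = 0" "has L i (pf (ps c)) (tlc x) y"
    then show ?thesis using H[OF a(4)] by (simp add: dec_cases list_decode_nz eval.prim0)
  next
    assume a: "pf c = 4" "x \<noteq> 0" "hdc x \<noteq> 0" "has L i c (consc (hdc x - 1) (tlc x)) w"
      "has L i (ps (ps c)) (consc (hdc x - 1) (consc w (tlc x))) y"
    have 1: "eval (Prim (dec (pf (ps c))) (dec (ps (ps c)))) ((hdc x - 1) # list_decode (tlc x)) w"
      using H[OF a(4)] a(1) by (simp add: dec_cases)
    have 2: "eval (dec (ps (ps c))) ((hdc x - 1) # w # list_decode (tlc x)) y"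
      using H[OF a(5)] by simp
    have "list_decode x = Suc (hdc x - 1) # list_decode (tlc x)" using a(2,3) by (simp add: list_decode_nz)
    then show ?thesis using eval.primS[OF 1 2] a(1) by (simp add: dec_cases)
  next
    assume a: "pf c = 5" "has L i (ps c) (consc y x) 0" "\<forall>m<y. haspos L i (ps c) (consc m x)"
    have 1: "eval (dec (ps c)) (y # list_decode x) 0" using H[OF a(2)] by simp
    have 2: "\<forall>m<y. \<exists>z. eval (dec (ps c)) (m # list_decode x) (Suc z)" using a(3) HP by fastforce
    show ?thesis using eval.mn[OF 1 2] a(1) by (simp add: dec_cases)
  qed
  then show ?case by (simp add: c_def x_def y_def)
qed


abbreviation "cont L c x y \<equiv> has L (length L) c x y"

lemma has_app: "has L i c x y \<Longrightarrow> i \<le> length L \<Longrightarrow> has (L @ M) i c x y"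
proof -
  assume "has L i c x y" "i \<le> length L"
  then obtain k where "k < i" "k < length L" "ec (L!k) = c \<and> ex (L!k) = x \<and> ey (L!k) = y" by (auto simp: has_def)
  then show ?thesis unfolding has_def by (intro exI[of _ k]) (simp add: nth_append)
qed
lemma has_pre: "has M i c x y \<Longrightarrow> has (L @ M) (length L + i) c x y"
proof -
  assume "has M i c x y"
  then obtain k where "k < i" "ec (M!k) = c \<and> ex (M!k) = x \<and> ey (M!k) = y" by (auto simp: has_def)
  then show ?thesis unfolding has_def by (intro exI[of _ "length L + k"]) simp
qed
lemma haspos_app: "haspos L i c x \<Longrightarrow> i \<le> length L \<Longrightarrow> haspos (L @ M) i c x"
proof -
  assume "haspos L i c x" "i \<le> length L"
  then obtain k where "k < i" "k < length L" "ec (L!k) = c \<and> ex (L!k) = x \<and> 0 < ey (L!k)" by (auto simp: haspos_def)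
  then show ?thesis unfolding haspos_def by (intro exI[of _ k]) (simp add: nth_append)
qed
lemma haspos_pre: "haspos M i c x \<Longrightarrow> haspos (L @ M) (length L + i) c x"
proof -
  assume "haspos M i c x"
  then obtain k where "k < i" "ec (M!k) = c \<and> ex (M!k) = x \<and> 0 < ey (M!k)" by (auto simp: haspos_def)
  then show ?thesis unfolding haspos_def by (intro exI[of _ "length L + k"]) simp
qed
lemma has_same: "has (L @ M) (length L) c x y = has L (length L) c x y"
  by (auto simp: has_def nth_append)
lemma haspos_same: "haspos (L @ M) (length L) c x = haspos L (length L) c x"
  by (auto simp: haspos_def nth_append)

lemma justq_app: "justq L i c x y w \<Longrightarrow> i \<le> length L \<Longrightarrow> justq (L @ M) i c x y w"
  unfolding justq_def by (elim disjE conjE) (simp_all add: has_app haspos_app)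
lemma justq_pre: "justq M i c x y w \<Longrightarrow> justq (L @ M) (length L + i) c x y w"
  unfolding justq_def by (elim disjE conjE) (simp_all add: has_pre haspos_pre)

lemma valid_app: "valid L \<Longrightarrow> valid M \<Longrightarrow> valid (L @ M)"
  unfolding valid_def just_def
proof (intro allI impI)
  fix i assume vL: "\<forall>i<length L. justq L i (ec (L ! i)) (ex (L ! i)) (ey (L ! i)) (ew (L ! i))"
    and vM: "\<forall>i<length M. justq M i (ec (M ! i)) (ex (M ! i)) (ey (M ! i)) (ew (M ! i))"
    and i: "i < length (L @ M)"
  show "justq (L @ M) i (ec ((L @ M) ! i)) (ex ((L @ M) ! i)) (ey ((L @ M) ! i)) (ew ((L @ M) ! i))"
  proof (cases "i < length L")
    case True then show ?thesis using vL justq_app by (simp add: nth_append)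
  next
    case False
    then obtain j where j: "i = length L + j" "j < length M" using i
      by (metis add_diff_inverse_nat length_append nat_add_left_cancel_less)
    then show ?thesis using vM justq_pre by (simp add: nth_append)
  qed
qed

lemma valid_snoc: "valid L \<Longrightarrow> justq L (length L) c x y w \<Longrightarrow> valid (L @ [mkent c x y w])"
proof -
  assume v: "valid L" and j: "justq L (length L) c x y w"
  have "justq (L @ [mkent c x y w]) (length L) c x y w"
    using j unfolding justq_def has_same haspos_same .
  then show ?thesis using v unfolding valid_def just_def
    by (auto simp: nth_append less_Suc_eq justq_app)
qed

lemma cont_snoc: "cont (L @ [mkent c x y w]) c x y"
  by (auto simp: has_def)

lemma cont_mono: "cont L c x y \<Longrightarrow> cont (L @ M) c x y \<and> cont (M @ L) c x y"
proof
  assume "cont L c x y"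
  then show "cont (L @ M) c x y" using has_app[of L "length L"] by (simp add: has_def nth_append) (metis trans_less_add1)
  show "cont (M @ L) c x y" using has_pre[OF \<open>cont L c x y\<close>, of M] by simp
qed

lemma combine:
  fixes n :: nat and Q :: "nat \<Rightarrow> nat list \<Rightarrow> bool"
  assumes mono: "\<And>j L M. Q j L \<Longrightarrow> Q j (L @ M) \<and> Q j (M @ L)"
  shows "\<forall>j<n. \<exists>L. valid L \<and> Q j L \<Longrightarrow> \<exists>L. valid L \<and> (\<forall>j<n. Q j L)"
proof (induction n)
  case 0 then show ?case by (auto intro!: exI[of _ "[]"] simp: valid_def)
next
  case (Suc n)
  then obtain L where L: "valid L" "\<forall>j<n. Q j L" by auto
  obtain M where M: "valid M" "Q n M" using Suc.prems by auto
  have "valid (L @ M)" using L M valid_app by blast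
  moreover have "\<forall>j<Suc n. Q j (L @ M)" using L M mono by (auto simp: less_Suc_eq)
  ultimately show ?case by blast
qed

declare list_encode.simps(2)[simp del] list_encode_Cons[simp]
lemma lenc_enc[simp]: "lenc (list_encode xs) = length xs" by (simp add: lenc_def)
declare nthc_enc[simp]

lemma complete: "eval r xs y \<Longrightarrow> \<exists>L. valid L \<and> cont L (enc r) (list_encode xs) y"
proof (induction r xs y rule: eval.induct)
  case (zero xs)
  have "valid ([] @ [mkent (enc Zero) (list_encode xs) 0 0])"
    by (rule valid_snoc) (auto simp: valid_def justq_def)
  then show ?case using cont_snoc by fastforce
next
  case (succ x xs)
  have "valid ([] @ [mkent (enc Succ) (list_encode (x # xs)) (Suc x) 0])"
    by (rule valid_snoc) (auto simp: valid_def justq_def list_encode_Cons)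
  then show ?case using cont_snoc by fastforce
next
  case (proj i xs)
  have "valid ([] @ [mkent (enc (Proj i)) (list_encode xs) (xs ! i) 0])"
    by (rule valid_snoc) (use proj in \<open>auto simp: valid_def justq_def\<close>)
  then show ?case using cont_snoc by fastforce
next
  case (comp xs gs ys f z)
  have "\<forall>j<length gs. \<exists>L. valid L \<and> cont L (enc (gs ! j)) (list_encode xs) (ys ! j)"
    using comp(1) by (auto simp: list_all2_conv_all_nth)
  then obtain L1 where L1: "valid L1" "\<forall>j<length gs. cont L1 (enc (gs ! j)) (list_encode xs) (ys ! j)"
    using combine[where n="length gs" and Q="\<lambda>j L. cont L (enc (gs ! j)) (list_encode xs) (ys ! j)"] cont_mono by blast
  obtain L2 where L2: "valid L2" "cont L2 (enc f) (list_encode ys) z" using comp(2) by blast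
  let ?L = "L1 @ L2"
  have v: "valid ?L" using L1 L2 valid_app by blast
  have c1: "\<forall>j<length gs. cont ?L (enc (gs ! j)) (list_encode xs) (ys ! j)" using L1 cont_mono by blast
  have c2: "cont ?L (enc f) (list_encode ys) z" using L2 cont_mono by blast
  have len: "length ys = length gs" using list_all2_lengthD[OF comp(1)] by simp
  have "valid (?L @ [mkent (enc (Comp f gs)) (list_encode xs) z (list_encode ys)])"
    by (rule valid_snoc[OF v]) (use c1 c2 len in \<open>auto simp: justq_def\<close>)
  then show ?case using cont_snoc by fastforce
next
  case (prim0 f xs y g)
  obtain L where L: "valid L" "cont L (enc f) (list_encode xs) y" using prim0 by blast
  have "valid (L @ [mkent (enc (Prim f g)) (list_encode (0 # xs)) y 0])"
    by (rule valid_snoc[OF L(1)]) (use L in \<open>auto simp: justq_def list_encode_Cons\<close>)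
  then show ?case using cont_snoc by fastforce
next
  case (primS f g n xs y z)
  obtain L1 where L1: "valid L1" "cont L1 (enc (Prim f g)) (list_encode (n # xs)) y" using primS by blast
  obtain L2 where L2: "valid L2" "cont L2 (enc g) (list_encode (n # y # xs)) z" using primS by blast
  let ?L = "L1 @ L2"
  have v: "valid ?L" using L1 L2 valid_app by blast
  have c1: "cont ?L (enc (Prim f g)) (list_encode (n # xs)) y" using L1 cont_mono by blast
  have c2: "cont ?L (enc g) (list_encode (n # y # xs)) z" using L2 cont_mono by blast
  have "valid (?L @ [mkent (enc (Prim f g)) (list_encode (Suc n # xs)) z y])"
    by (rule valid_snoc[OF v]) (use c1 c2 in \<open>auto simp: justq_def list_encode_Cons\<close>)
  then show ?case using cont_snoc by fastforce
next
  case (mn f n xs)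
  obtain L1 where L1: "valid L1" "cont L1 (enc f) (list_encode (n # xs)) 0" using mn by blast
  have "\<forall>m<n. \<exists>L. valid L \<and> (\<exists>y. cont L (enc f) (list_encode (m # xs)) (Suc y))"
    using mn(3) by blast
  then obtain L2 where L2: "valid L2" "\<forall>m<n. \<exists>y. cont L2 (enc f) (list_encode (m # xs)) (Suc y)"
    using combine[where n=n and Q="\<lambda>m L. \<exists>y. cont L (enc f) (list_encode (m # xs)) (Suc y)"] cont_mono by blast
  let ?L = "L1 @ L2"
  have v: "valid ?L" using L1 L2 valid_app by blast
  have c1: "cont ?L (enc f) (list_encode (n # xs)) 0" using L1 cont_mono by blast
  have c2: "\<forall>m<n. \<exists>y. cont ?L (enc f) (list_encode (m # xs)) (Suc y)" using L2 cont_mono by blast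
  have c2': "\<forall>m<n. haspos ?L (length ?L) (enc f) (consc m (list_encode xs))"
    using c2 by (auto simp: has_def haspos_def list_encode_Cons) (metis zero_less_Suc)
  have "valid (?L @ [mkent (enc (Mn f)) (list_encode xs) n 0])"
    by (rule valid_snoc[OF v]) (use c1 c2' in \<open>auto simp: justq_def list_encode_Cons\<close>)
  then show ?case using cont_snoc by fastforce
qed

lemma sound: "valid L \<Longrightarrow> cont L (enc r) (list_encode xs) y \<Longrightarrow> eval r xs y"
  using sound_aux[of L] by (auto simp: has_def) (metis dec_enc list_encode_inverse)


definition "r_tri = Prim Zero (ADD (Proj 1) (S1 (Proj 0)))"
lemma r_tri[simp]: "peval r_tri [k] = triangle k" "pr r_tri (Suc 0)"
  by (induction k) (auto simp: r_tri_def peval_Prim_Cons)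

lemma tri_mono: "m \<le> n \<Longrightarrow> triangle m \<le> triangle n"
  by (induction n) (auto simp: le_Suc_eq)
lemma tri_ge: "n \<le> triangle n"
  by (induction n) auto

definition "r_s = BMIN (Suc 0) (S1 (Proj 0)) (LT (Proj 1) (Comp r_tri [S1 (Proj 0)]))"
lemma r_s[simp]: "peval r_s [p] = pf p + ps p" "pr r_s (Suc 0)"
proof -
  let ?a = "pf p" and ?b = "ps p"
  have p: "p = triangle (?a + ?b) + ?a" by (rule p_tri)
  have ex: "\<exists>j<Suc p. p < triangle (Suc j)"
  proof (intro exI conjI)
    show "?a + ?b < Suc p" using tri_ge[of "?a + ?b"] p by linarith
    show "p < triangle (Suc (?a + ?b))" using p by simp
  qed
  have le: "(LEAST j. p < triangle (Suc j)) = ?a + ?b"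
  proof (rule Least_equality)
    show "p < triangle (Suc (?a + ?b))" using p by simp
    fix j assume "p < triangle (Suc j)"
    show "?a + ?b \<le> j"
    proof (rule ccontr)
      assume "\<not> ?a + ?b \<le> j"
      then have "triangle (Suc j) \<le> triangle (?a + ?b)" by (intro tri_mono) simp
      then show False using \<open>p < triangle (Suc j)\<close> p by linarith
    qed
  qed
  show "peval r_s [p] = pf p + ps p"
    unfolding r_s_def by (subst BMIN) (use ex le in auto)
  show "pr r_s (Suc 0)" unfolding r_s_def by (rule pr_BMIN) auto
qed

definition "r_pf = SUB (Proj 0) (Comp r_tri [r_s])"
lemma r_pf[simp]: "peval r_pf [p] = pf p" "pr r_pf (Suc 0)"
  using p_tri[of p] by (auto simp: r_pf_def)
definition "r_ps = SUB r_s r_pf"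
lemma r_ps[simp]: "peval r_ps [p] = ps p" "pr r_ps (Suc 0)"
  by (auto simp: r_ps_def)

definition "PF g = Comp r_pf [g]"
definition "PS g = Comp r_ps [g]"
definition "PAIR g h = ADD (Comp r_tri [ADD g h]) g"
lemma PF[simp]: "peval (PF g) xs = pf (peval g xs)" "pr (PF g) n = pr g n" by (auto simp: PF_def)
lemma PS[simp]: "peval (PS g) xs = ps (peval g xs)" "pr (PS g) n = pr g n" by (auto simp: PS_def)
lemma PAIR[simp]: "peval (PAIR g h) xs = pair (peval g xs) (peval h xs)" "pr (PAIR g h) n = (pr g n \<and> pr h n)"
  by (auto simp: PAIR_def pair_def prod_encode_def)

definition "HDC g = PF (SUB g (rc 1))"
definition "TLC g = PS (SUB g (rc 1))"
definition "CONSC g h = S1 (PAIR g h)"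
lemma HDC[simp]: "peval (HDC g) xs = hdc (peval g xs)" "pr (HDC g) n = pr g n" by (auto simp: HDC_def hdc_def)
lemma TLC[simp]: "peval (TLC g) xs = tlc (peval g xs)" "pr (TLC g) n = pr g n" by (auto simp: TLC_def tlc_def)
lemma CONSC[simp]: "peval (CONSC g h) xs = consc (peval g xs) (peval h xs)" "pr (CONSC g h) n = (pr g n \<and> pr h n)"
  by (auto simp: CONSC_def consc_def)

definition "r_tlpow = r_iter (TLC (Proj 0))"
lemma r_tlpow[simp]: "peval r_tlpow [j, l] = (tlc ^^ j) l" "pr r_tlpow (Suc (Suc 0))"
proof -
  have "(\<lambda>v. peval (TLC (Proj 0)) [v]) = tlc" by auto
  then show "peval r_tlpow [j, l] = (tlc ^^ j) l" by (simp add: r_tlpow_def r_iter)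
  show "pr r_tlpow (Suc (Suc 0))" unfolding r_tlpow_def using pr_r_iter[of "TLC (Proj 0)"]
    by (simp add: numeral_2_eq_2)
qed

definition "NTHC l j = HDC (Comp r_tlpow [j, l])"
lemma NTHC[simp]: "peval (NTHC l j) xs = nthc (peval l xs) (peval j xs)" "pr (NTHC l j) n = (pr l n \<and> pr j n)"
  by (auto simp: NTHC_def nthc_def)

lemma length_le_enc: "length xs \<le> list_encode xs"
proof (induction xs)
  case Nil then show ?case by simp
next
  case (Cons a xs) then show ?case using le_prod_encode_2[of "list_encode xs" a]
    by (simp add: list_encode_Cons consc_def pair_def)
qed

definition "r_len = BMIN (Suc 0) (S1 (Proj 0)) (EQ (Comp r_tlpow [Proj 0, Proj 1]) Zero)"
lemma r_len[simp]: "peval r_len [l] = lenc l" "pr r_len (Suc 0)"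
proof -
  define xs where "xs = list_decode l"
  have l: "l = list_encode xs" by (simp add: xs_def)
  have z: "(tlc ^^ j) l = 0 \<longleftrightarrow> length xs \<le> j" for j
    using l tlpow_enc[of j xs] list_encode_eq[of "drop j xs" "[]"] by simp
  have ex: "\<exists>j<Suc l. (tlc ^^ j) l = 0" using z length_le_enc[of xs] l by (intro exI[of _ "length xs"]) auto
  have le: "(LEAST j. (tlc ^^ j) l = 0) = length xs"
    by (rule Least_equality) (use z in auto)
  show "peval r_len [l] = lenc l"
    unfolding r_len_def by (subst BMIN) (use ex le in \<open>auto simp: lenc_def xs_def\<close>)
  show "pr r_len (Suc 0)" unfolding r_len_def by (rule pr_BMIN) auto
qed
definition "LENC g = Comp r_len [g]"
lemma LENC[simp]: "peval (LENC g) xs = lenc (peval g xs)" "pr (LENC g) n = pr g n" by (auto simp: LENC_def)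

definition "EC q = PF q"
definition "EXQ q = PF (PS q)"
definition "EY q = PF (PS (PS q))"
lemma EC[simp]: "peval (EC g) xs = ec (peval g xs)" "pr (EC g) n = pr g n" by (auto simp: EC_def ec_def)
lemma EXQ[simp]: "peval (EXQ g) xs = ex (peval g xs)" "pr (EXQ g) n = pr g n" by (auto simp: EXQ_def ex_def)
lemma EY[simp]: "peval (EY g) xs = ey (peval g xs)" "pr (EY g) n = pr g n" by (auto simp: EY_def ey_def)
definition "EW q = PS (PS (PS q))"
lemma EW[simp]: "peval (EW g) xs = ew (peval g xs)" "pr (EW g) n = pr g n" by (auto simp: EW_def ew_def)

definition "UP n g = Comp g (shp (Suc 0) n)"
lemma UP[simp]: "length xs = n \<Longrightarrow> peval (UP n g) (k # xs) = peval g xs"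
  by (simp add: UP_def map_shp1)
lemma pr_UP[simp]: "pr g n \<Longrightarrow> pr (UP n g) (Suc n)"
  by (auto simp: UP_def intro: pr_shp)


definition HAS :: "nat \<Rightarrow> recf \<Rightarrow> recf \<Rightarrow> recf \<Rightarrow> recf \<Rightarrow> recf \<Rightarrow> recf" where
  "HAS n L i c x y = BEX n i (AND (EQ (EC (NTHC (UP n L) (Proj 0))) (UP n c))
     (AND (EQ (EXQ (NTHC (UP n L) (Proj 0))) (UP n x)) (EQ (EY (NTHC (UP n L) (Proj 0))) (UP n y))))"

lemma HAS: assumes "length xs = n" "peval i xs \<le> lenc (peval L xs)"
  shows "peval (HAS n L i c x y) xs = (if has (list_decode (peval L xs)) (peval i xs) (peval c xs) (peval x xs) (peval y xs) then 1 else 0)"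
proof -
  have e: "\<forall>j<peval i xs. nthc (peval L xs) j = list_decode (peval L xs) ! j"
    using assms(2) nthc_correct by auto
  show ?thesis unfolding HAS_def using assms(1) e by (subst BEX) (auto simp: has_def)
qed

lemma pr_HAS[simp]: "pr L n \<Longrightarrow> pr i n \<Longrightarrow> pr c n \<Longrightarrow> pr x n \<Longrightarrow> pr y n \<Longrightarrow> pr (HAS n L i c x y) n"
  unfolding HAS_def by (rule pr_BEX) auto

definition HASPOS :: "nat \<Rightarrow> recf \<Rightarrow> recf \<Rightarrow> recf \<Rightarrow> recf \<Rightarrow> recf" where
  "HASPOS n L i c x = BEX n i (AND (EQ (EC (NTHC (UP n L) (Proj 0))) (UP n c))
     (AND (EQ (EXQ (NTHC (UP n L) (Proj 0))) (UP n x)) (LT (rc 0) (EY (NTHC (UP n L) (Proj 0))))))"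

lemma HASPOS: assumes "length xs = n" "peval i xs \<le> lenc (peval L xs)"
  shows "peval (HASPOS n L i c x) xs = (if haspos (list_decode (peval L xs)) (peval i xs) (peval c xs) (peval x xs) then 1 else 0)"
proof -
  have e: "\<forall>j<peval i xs. nthc (peval L xs) j = list_decode (peval L xs) ! j"
    using assms(2) nthc_correct by auto
  show ?thesis unfolding HASPOS_def using assms(1) e by (subst BEX) (auto simp: haspos_def)
qed

lemma pr_HASPOS[simp]: "pr L n \<Longrightarrow> pr i n \<Longrightarrow> pr c n \<Longrightarrow> pr x n \<Longrightarrow> pr (HASPOS n L i c x) n"
  unfolding HASPOS_def by (rule pr_BEX) auto

definition "jL = Proj 0"
definition "jI = Proj 1"
definition "jQ = NTHC jL jI"
definition "jc = EC jQ"
definition "jx = EXQ jQ"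
definition "jy = EY jQ"
definition "jw = EW jQ"
lemmas jdefs = jL_def jI_def jQ_def jc_def jx_def jy_def jw_def

definition "jd0 = AND (EQ (PF jc) (rc 0)) (EQ jy (rc 0))"
lemma jd0: assumes "i < lenc L" "c = ec (nthc L i)" "x = ex (nthc L i)" "y = ey (nthc L i)" "w = ew (nthc L i)" "LL = list_decode L"
  shows "(peval jd0 [L, i] \<noteq> 0) = (pf c = 0 \<and> y = 0)"
  using assms(1) unfolding jd0_def assms(2-6) by (simp add: jdefs BALL HAS HASPOS less_imp_le numeral_2_eq_2 numeral_3_eq_3)
lemma pr_jd0: "pr jd0 (Suc (Suc 0))" unfolding jd0_def by (simp add: jdefs pr_BALL)

definition "jd1 = AND (EQ (PF jc) (rc 1)) (AND (SG jx) (EQ jy (S1 (HDC jx))))"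
lemma jd1: assumes "i < lenc L" "c = ec (nthc L i)" "x = ex (nthc L i)" "y = ey (nthc L i)" "w = ew (nthc L i)" "LL = list_decode L"
  shows "(peval jd1 [L, i] \<noteq> 0) = (pf c = 1 \<and> x \<noteq> 0 \<and> y = Suc (hdc x))"
  using assms(1) unfolding jd1_def assms(2-6) by (simp add: jdefs BALL HAS HASPOS less_imp_le numeral_2_eq_2 numeral_3_eq_3)
lemma pr_jd1: "pr jd1 (Suc (Suc 0))" unfolding jd1_def by (simp add: jdefs pr_BALL)

definition "jd2 = AND (EQ (PF jc) (rc 2)) (AND (LT (PS jc) (LENC jx)) (EQ jy (NTHC jx (PS jc))))"
lemma jd2: assumes "i < lenc L" "c = ec (nthc L i)" "x = ex (nthc L i)" "y = ey (nthc L i)" "w = ew (nthc L i)" "LL = list_decode L"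
  shows "(peval jd2 [L, i] \<noteq> 0) = (pf c = 2 \<and> ps c < lenc x \<and> y = nthc x (ps c))"
  using assms(1) unfolding jd2_def assms(2-6) by (simp add: jdefs BALL HAS HASPOS less_imp_le numeral_2_eq_2 numeral_3_eq_3)
lemma pr_jd2: "pr jd2 (Suc (Suc 0))" unfolding jd2_def by (simp add: jdefs pr_BALL)

definition "jd3 = AND (EQ (PF jc) (rc 3)) (AND (EQ (LENC jw) (LENC (PS (PS jc)))) (AND (BALL (Suc (Suc 0)) (LENC (PS (PS jc))) (HAS (Suc (Suc (Suc 0))) (UP (Suc (Suc 0)) jL) (UP (Suc (Suc 0)) jI) (NTHC (UP (Suc (Suc 0)) (PS (PS jc))) (Proj 0)) (UP (Suc (Suc 0)) jx) (NTHC (UP (Suc (Suc 0)) jw) (Proj 0)))) (HAS (Suc (Suc 0)) jL jI (PF (PS jc)) jw jy)))"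
lemma jd3: assumes "i < lenc L" "c = ec (nthc L i)" "x = ex (nthc L i)" "y = ey (nthc L i)" "w = ew (nthc L i)" "LL = list_decode L"
  shows "(peval jd3 [L, i] \<noteq> 0) = (pf c = 3 \<and> lenc w = lenc (ps (ps c)) \<and> (\<forall>j<lenc (ps (ps c)). has LL i (nthc (ps (ps c)) j) x (nthc w j)) \<and> has LL i (pf (ps c)) w y)"
  using assms(1) unfolding jd3_def assms(2-6) by (simp add: jdefs BALL HAS HASPOS less_imp_le numeral_2_eq_2 numeral_3_eq_3) blast
lemma pr_jd3: "pr jd3 (Suc (Suc 0))" unfolding jd3_def by (simp add: jdefs pr_BALL)

definition "jd4 = AND (EQ (PF jc) (rc 4)) (AND (SG jx) (AND (EQ (HDC jx) (rc 0)) (HAS (Suc (Suc 0)) jL jI (PF (PS jc)) (TLC jx) jy)))"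
lemma jd4: assumes "i < lenc L" "c = ec (nthc L i)" "x = ex (nthc L i)" "y = ey (nthc L i)" "w = ew (nthc L i)" "LL = list_decode L"
  shows "(peval jd4 [L, i] \<noteq> 0) = (pf c = 4 \<and> x \<noteq> 0 \<and> hdc x = 0 \<and> has LL i (pf (ps c)) (tlc x) y)"
  using assms(1) unfolding jd4_def assms(2-6) by (simp add: jdefs BALL HAS HASPOS less_imp_le numeral_2_eq_2 numeral_3_eq_3)
lemma pr_jd4: "pr jd4 (Suc (Suc 0))" unfolding jd4_def by (simp add: jdefs pr_BALL)

definition "jd5 = AND (EQ (PF jc) (rc 4)) (AND (SG jx) (AND (SG (HDC jx)) (AND (HAS (Suc (Suc 0)) jL jI jc (CONSC (SUB (HDC jx) (rc 1)) (TLC jx)) jw) (HAS (Suc (Suc 0)) jL jI (PS (PS jc)) (CONSC (SUB (HDC jx) (rc 1)) (CONSC jw (TLC jx))) jy))))"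
lemma jd5: assumes "i < lenc L" "c = ec (nthc L i)" "x = ex (nthc L i)" "y = ey (nthc L i)" "w = ew (nthc L i)" "LL = list_decode L"
  shows "(peval jd5 [L, i] \<noteq> 0) = (pf c = 4 \<and> x \<noteq> 0 \<and> hdc x \<noteq> 0 \<and> has LL i c (consc (hdc x - 1) (tlc x)) w \<and> has LL i (ps (ps c)) (consc (hdc x - 1) (consc w (tlc x))) y)"
  using assms(1) unfolding jd5_def assms(2-6) by (simp add: jdefs BALL HAS HASPOS less_imp_le numeral_2_eq_2 numeral_3_eq_3)
lemma pr_jd5: "pr jd5 (Suc (Suc 0))" unfolding jd5_def by (simp add: jdefs pr_BALL)

definition "jd6 = AND (EQ (PF jc) (rc 5)) (AND (HAS (Suc (Suc 0)) jL jI (PS jc) (CONSC jy jx) (rc 0)) (BALL (Suc (Suc 0)) jy (HASPOS (Suc (Suc (Suc 0))) (UP (Suc (Suc 0)) jL) (UP (Suc (Suc 0)) jI) (UP (Suc (Suc 0)) (PS jc)) (CONSC (Proj 0) (UP (Suc (Suc 0)) jx)))))"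
lemma jd6: assumes "i < lenc L" "c = ec (nthc L i)" "x = ex (nthc L i)" "y = ey (nthc L i)" "w = ew (nthc L i)" "LL = list_decode L"
  shows "(peval jd6 [L, i] \<noteq> 0) = (pf c = 5 \<and> has LL i (ps c) (consc y x) 0 \<and> (\<forall>m<y. haspos LL i (ps c) (consc m x)))"
  using assms(1) unfolding jd6_def assms(2-6) by (simp add: jdefs BALL HAS HASPOS less_imp_le numeral_2_eq_2 numeral_3_eq_3) blast
lemma pr_jd6: "pr jd6 (Suc (Suc 0))" unfolding jd6_def by (simp add: jdefs pr_BALL)

definition "r_just = OR jd0 (OR jd1 (OR jd2 (OR jd3 (OR jd4 (OR jd5 jd6)))))"

lemma r_just: assumes "i < lenc L"
  shows "peval r_just [L, i] = (if just (list_decode L) i then 1 else 0)"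
proof -
  have q: "list_decode L ! i = nthc L i" using nthc_correct assms by simp
  show ?thesis
    unfolding just_def q justq_def
    using jd0[OF assms refl refl refl refl refl] jd1[OF assms refl refl refl refl refl]
      jd2[OF assms refl refl refl refl refl] jd3[OF assms refl refl refl refl refl]
      jd4[OF assms refl refl refl refl refl] jd5[OF assms refl refl refl refl refl]
      jd6[OF assms refl refl refl refl refl]
    by (simp add: r_just_def)
qed
lemma pr_r_just: "pr r_just (Suc (Suc 0))" by (simp add: r_just_def pr_jd0 pr_jd1 pr_jd2 pr_jd3 pr_jd4 pr_jd5 pr_jd6)


definition "r_valid = BALL (Suc 0) (LENC (Proj 0)) (Comp r_just [Proj 1, Proj 0])"
lemma r_valid: "peval r_valid [L] = (if valid (list_decode L) then 1 else 0)"
proof -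
  have "peval r_valid [L] = (if \<forall>j<lenc L. peval r_just [L, j] \<noteq> 0 then 1 else 0)"
    unfolding r_valid_def by (subst BALL) auto
  also have "\<dots> = (if valid (list_decode L) then 1 else 0)"
    using r_just by (auto simp: valid_def lenc_def)
  finally show ?thesis .
qed
lemma pr_r_valid: "pr r_valid (Suc 0)"
  unfolding r_valid_def by (rule pr_BALL) (auto simp: pr_r_just)

definition "xe e = pair 0 (pair e 0)"
definition "Pc e n = (valid (list_decode n) \<and> cont (list_decode n) e (list_encode [xe e]) 1)"

definition "r_P = AND (Comp r_valid [Proj 1])
   (HAS (Suc (Suc 0)) (Proj 1) (LENC (Proj 1)) (Proj 0) (CONSC (PAIR (rc 0) (PAIR (Proj 0) (rc 0))) (rc 0)) (rc 1))"
lemma r_P: "peval r_P [e, n] = (if Pc e n then 1 else 0)"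
  unfolding r_P_def by (simp add: HAS r_valid Pc_def xe_def lenc_def consc_def pair_def)
lemma pr_r_P: "pr r_P (Suc (Suc 0))"
  unfolding r_P_def using pr_r_valid by simp


datatype node = D nat nat | A nat nat | B nat nat | C nat nat nat | J nat nat

fun encN :: "node \<Rightarrow> nat" where
  "encN (D e k) = pair 0 (pair e k)"
| "encN (A e n) = pair 1 (pair e n)"
| "encN (B e n) = pair 2 (pair e n)"
| "encN (C e n k) = pair 3 (pair e (pair n k))"
| "encN (J t z) = pair (t + 4) z"

definition decN :: "nat \<Rightarrow> node" where
  "decN u = (if pf u = 0 then D (pf (ps u)) (ps (ps u)) else if pf u = 1 then A (pf (ps u)) (ps (ps u))
    else if pf u = 2 then B (pf (ps u)) (ps (ps u)) else if pf u = 3 then C (pf (ps u)) (pf (ps (ps u))) (ps (ps (ps u)))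
    else J (pf u - 4) (ps u))"

lemma decN_encN[simp]: "decN (encN v) = v"
  by (cases v) (auto simp: decN_def)
lemma encN_decN[simp]: "encN (decN u) = u"
proof -
  have u: "pair (pf u) (ps u) = u" by simp
  have v: "pair (pf (ps u)) (ps (ps u)) = ps u" by simp
  have w: "pair (pf (ps (ps u))) (ps (ps (ps u))) = ps (ps u)" by simp
  consider "pf u = 0" | "pf u = 1" | "pf u = 2" | "pf u = 3" | "pf u \<ge> 4" by linarith
  then show ?thesis
  proof cases
    case 5 then have "pf u - 4 + 4 = pf u" by simp
    with 5 show ?thesis unfolding decN_def using u by simp
  qed (simp_all add: decN_def u v w, (metis u v)+)
qed
lemma encN_inj[simp]: "encN v = encN w \<longleftrightarrow> v = w"
  by (metis decN_encN)

fun Fn :: "node \<Rightarrow> node" where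
  "Fn (D e k) = D e (Suc k)"
| "Fn (A e n) = (if n = 0 then D e 0 else A e (n - 1))"
| "Fn (B e n) = (if n = 0 then D e 0 else B e (n - 1))"
| "Fn (C e n k) = (if k = 0 then (if Pc e n then B e n else C e n 0) else C e n (k - 1))"
| "Fn (J t z) = J t z"

definition "fN u = encN (Fn (decN u))"

definition preS :: "node \<Rightarrow> node set" where
  "preS v = (case v of D e k \<Rightarrow> (if k = 0 then {A e 0, B e 0} else {D e (k - 1)})
     | A e n \<Rightarrow> {A e (Suc n)}
     | B e n \<Rightarrow> (if Pc e n then {B e (Suc n), C e n 0} else {B e (Suc n)})
     | C e n k \<Rightarrow> (if k = 0 \<and> \<not> Pc e n then {C e n (Suc 0), C e n 0} else {C e n (Suc k)})
     | J t z \<Rightarrow> {J t z})"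

lemma Fn_pre: "Fn w = v \<longleftrightarrow> w \<in> preS v"
  by (cases w; cases v) (auto simp: preS_def split: if_splits)

definition br :: "node \<Rightarrow> nat" where
  "br v = (case v of D e k \<Rightarrow> (if k = 0 then 2 else 1)
     | A e n \<Rightarrow> 1
     | B e n \<Rightarrow> (if Pc e n then 2 else 1)
     | C e n k \<Rightarrow> (if k = 0 \<and> \<not> Pc e n then 2 else 1)
     | J t z \<Rightarrow> 1)"

lemma card_preS: "card (preS v) = br v"
  by (cases v) (auto simp: preS_def br_def)

lemma fN_vimage: "fN -` {u} = encN ` preS (decN u)"
proof (rule set_eqI)
  fix x
  have "x \<in> fN -` {u} \<longleftrightarrow> Fn (decN x) = decN u"
    unfolding fN_def by (metis decN_encN encN_decN vimage_singleton_eq)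
  also have "\<dots> \<longleftrightarrow> decN x \<in> preS (decN u)" by (rule Fn_pre)
  also have "\<dots> \<longleftrightarrow> x \<in> encN ` preS (decN u)"
    by (metis decN_encN encN_decN image_iff)
  finally show "x \<in> fN -` {u} \<longleftrightarrow> x \<in> encN ` preS (decN u)" .
qed

lemma card_fN_vimage: "card (fN -` {u}) = br (decN u)"
proof -
  have "inj_on encN (preS (decN u))" by (auto intro: inj_onI)
  then show ?thesis by (simp add: fN_vimage card_image card_preS)
qed

definition "ut = PF (Proj 0)"
definition "uz = PS (Proj 0)"
definition "ue = PF uz"
definition "um = PS uz"
lemmas udefs = ut_def uz_def ue_def um_def

definition "r_f = IF (EQ ut (rc 0)) (PAIR (rc 0) (PAIR ue (S1 um)))
 (IF (EQ ut (rc 1)) (IF (EQ um (rc 0)) (PAIR (rc 0) (PAIR ue (rc 0))) (PAIR (rc 1) (PAIR ue (SUB um (rc 1)))))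
 (IF (EQ ut (rc 2)) (IF (EQ um (rc 0)) (PAIR (rc 0) (PAIR ue (rc 0))) (PAIR (rc 2) (PAIR ue (SUB um (rc 1)))))
 (IF (EQ ut (rc 3)) (IF (EQ (PS um) (rc 0)) (IF (Comp r_P [ue, PF um]) (PAIR (rc 2) (PAIR ue (PF um))) (Proj 0))
        (PAIR (rc 3) (PAIR ue (PAIR (PF um) (SUB (PS um) (rc 1)))))) (Proj 0))))"

lemma r_f_enc: "peval r_f [encN v] = encN (Fn v)"
  by (cases v) (auto simp: r_f_def udefs r_P)

lemma r_f: "peval r_f [u] = fN u"
  using r_f_enc[of "decN u"] by (simp add: fN_def)

lemma pr_r_f: "pr r_f (Suc 0)"
  using pr_r_P by (simp add: r_f_def udefs)

definition "r_br = IF (EQ ut (rc 0)) (IF (EQ um (rc 0)) (rc 2) (rc 1))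
 (IF (EQ ut (rc 2)) (IF (Comp r_P [ue, um]) (rc 2) (rc 1))
 (IF (EQ ut (rc 3)) (IF (AND (EQ (PS um) (rc 0)) (NSG (Comp r_P [ue, PF um]))) (rc 2) (rc 1)) (rc 1)))"

lemma r_br_enc: "peval r_br [encN v] = br v"
  by (cases v) (auto simp: r_br_def udefs r_P br_def)

lemma r_br: "peval r_br [u] = branching fN u"
  using r_br_enc[of "decN u"] by (simp add: branching_def card_fN_vimage)

lemma pr_r_br: "pr r_br (Suc 0)"
  using pr_r_P by (simp add: r_br_def udefs)

lemma computable_fN: "computable1 fN"
  unfolding computable1_def using peval_eval[OF pr_r_f] r_f by (metis length_Cons list.size(3) le_refl One_nat_def)

lemma computable_br: "computable1 (branching fN)"
  unfolding computable1_def using peval_eval[OF pr_r_br] r_br by (metis length_Cons list.size(3) le_refl One_nat_def)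

lemma is21: "is_21_structure fN"
  unfolding is_21_structure_def card_fN_vimage by (auto simp: br_def split: node.split)


lemma chain_pow:
  assumes ch: "\<And>u n. f u = g n \<longleftrightarrow> u = g (Suc n)"
  shows "(f ^^ m) u = g n \<longleftrightarrow> u = g (n + m)"
proof (induction m arbitrary: u n)
  case 0 then show ?case by simp
next
  case (Suc m)
  have "(f ^^ Suc m) u = (f ^^ m) (f u)" by (simp only: funpow_Suc_right o_apply)
  then show ?case using Suc ch by simp
qed

lemma chain_verts:
  assumes ch: "\<And>u n. f u = g n \<longleftrightarrow> u = g (Suc n)"
  shows "tree_verts f (g 0) = range g"
  unfolding tree_verts_def using chain_pow[where f=f and g=g, OF ch] by auto

lemma edge_iff: "(a, b) \<in> tree_edges f x \<longleftrightarrow> a \<in> tree_verts f x \<and> f a \<in> tree_verts f x \<and> b = f a"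
  by (auto simp: tree_edges_def)

lemma chain_edge:
  assumes ch: "\<And>u n. f u = g n \<longleftrightarrow> u = g (Suc n)" and i: "inj g"
  shows "(g i, g j) \<in> tree_edges f (g 0) \<longleftrightarrow> i = Suc j"
proof -
  have a: "f (g i) = g j \<longleftrightarrow> i = Suc j" using ch[of "g i" j] i by (auto dest: injD)
  show ?thesis unfolding edge_iff chain_verts[where f=f and g=g, OF ch] using a by auto
qed

lemma chain_iso:
  assumes ch1: "\<And>u n. f u = g1 n \<longleftrightarrow> u = g1 (Suc n)"
    and ch2: "\<And>u n. f u = g2 n \<longleftrightarrow> u = g2 (Suc n)"
    and i1: "inj g1" and i2: "inj g2"
  shows "tree_iso f (g1 0) (g2 0)"
proof -
  define h where "h = g2 \<circ> inv g1"
  have hg: "h (g1 i) = g2 i" for i by (simp add: h_def i1)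
  have bij: "bij_betw h (range g1) (range g2)"
  proof (rule bij_betw_imageI)
    show "inj_on h (range g1)"
    proof (rule inj_onI)
      fix a b assume ab: "a \<in> range g1" "b \<in> range g1" "h a = h b"
      then obtain i j where "a = g1 i" "b = g1 j" by auto
      then show "a = b" using hg ab(3) i2 by (simp add: inj_eq)
    qed
    show "h ` range g1 = range g2" by (auto simp: hg image_iff)
  qed
  have e1: "(g1 i, g1 j) \<in> tree_edges f (g1 0) \<longleftrightarrow> i = Suc j" for i j
    by (rule chain_edge[where f=f and g=g1, OF ch1 i1])
  have e2: "(g2 i, g2 j) \<in> tree_edges f (g2 0) \<longleftrightarrow> i = Suc j" for i j
    by (rule chain_edge[where f=f and g=g2, OF ch2 i2])
  show ?thesis unfolding tree_iso_def chain_verts[where f=f and g=g1, OF ch1] chain_verts[where f=f and g=g2, OF ch2]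
    by (intro exI[of _ h] conjI bij) (auto simp: hg e1 e2)
qed

lemma nonchain_aux:
  assumes ch: "\<And>u n. f u = g n \<longleftrightarrow> u = g (Suc n)"
    and p: "p1 \<noteq> p2" "f p1 = v" "f p2 = v" "p1 \<in> tree_verts f x" "p2 \<in> tree_verts f x" "v \<in> tree_verts f x"
    and bij: "bij_betw h (tree_verts f x) (tree_verts f (g 0))"
    and ed: "\<forall>a\<in>tree_verts f x. \<forall>b\<in>tree_verts f x. (a, b) \<in> tree_edges f x \<longrightarrow> (h a, h b) \<in> tree_edges f (g 0)"
  shows False
proof -
  have hv: "h v \<in> range g" using bij p(6) chain_verts[where f=f and g=g, OF ch] by (auto dest: bij_betw_apply)
  then obtain m where m: "h v = g m" by auto
  have "(p1, v) \<in> tree_edges f x" using p by (auto simp: edge_iff)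
  then have "(h p1, h v) \<in> tree_edges f (g 0)" using ed p by blast
  then have "f (h p1) = g m" using m by (auto simp: edge_iff)
  then have 1: "h p1 = g (Suc m)" using ch by blast
  have "(p2, v) \<in> tree_edges f x" using p by (auto simp: edge_iff)
  then have "(h p2, h v) \<in> tree_edges f (g 0)" using ed p by blast
  then have "f (h p2) = g m" using m by (auto simp: edge_iff)
  then have 2: "h p2 = g (Suc m)" using ch by blast
  have "inj_on h (tree_verts f x)" using bij by (simp add: bij_betw_def)
  then show False using 1 2 p by (metis inj_onD)
qed

lemma nonchain:
  assumes ch: "\<And>u n. f u = g n \<longleftrightarrow> u = g (Suc n)"
    and p: "p1 \<noteq> p2" "f p1 = v" "f p2 = v" "p1 \<in> tree_verts f x" "p2 \<in> tree_verts f x" "v \<in> tree_verts f x"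
  shows "\<not> tree_iso f x (g 0)" "\<not> tree_iso f (g 0) x"
proof
  assume "tree_iso f x (g 0)"
  then obtain h where "bij_betw h (tree_verts f x) (tree_verts f (g 0))"
    "\<forall>a\<in>tree_verts f x. \<forall>b\<in>tree_verts f x. (a, b) \<in> tree_edges f x \<longleftrightarrow> (h a, h b) \<in> tree_edges f (g 0)"
    unfolding tree_iso_def by blast
  then show False using nonchain_aux[where f=f and g=g, OF ch p] by blast
next
  show "\<not> tree_iso f (g 0) x"
  proof
    assume "tree_iso f (g 0) x"
    then obtain h where b: "bij_betw h (tree_verts f (g 0)) (tree_verts f x)"
      and e: "\<forall>a\<in>tree_verts f (g 0). \<forall>b\<in>tree_verts f (g 0). (a, b) \<in> tree_edges f (g 0) \<longleftrightarrow> (h a, h b) \<in> tree_edges f x"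
      unfolding tree_iso_def by blast
    define h' where "h' = inv_into (tree_verts f (g 0)) h"
    have b': "bij_betw h' (tree_verts f x) (tree_verts f (g 0))" unfolding h'_def by (rule bij_betw_inv_into[OF b])
    have hh: "h (h' a) = a" if "a \<in> tree_verts f x" for a
      unfolding h'_def using b that by (meson bij_betw_inv_into_right)
    have "\<forall>a\<in>tree_verts f x. \<forall>b\<in>tree_verts f x. (a, b) \<in> tree_edges f x \<longrightarrow> (h' a, h' b) \<in> tree_edges f (g 0)"
    proof (intro ballI impI)
      fix a b assume ab: "a \<in> tree_verts f x" "b \<in> tree_verts f x" "(a, b) \<in> tree_edges f x"
      have "h' a \<in> tree_verts f (g 0)" "h' b \<in> tree_verts f (g 0)" using b' ab by (auto dest: bij_betw_apply)
      then show "(h' a, h' b) \<in> tree_edges f (g 0)" using e ab hh by metis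
    qed
    then show False using nonchain_aux[where f=f and g=g, OF ch p b'] by blast
  qed
qed


declare encN.simps[simp del]

lemma fN_eq: "fN u = encN v \<longleftrightarrow> decN u \<in> preS v"
  unfolding fN_def by (simp add: Fn_pre)

lemma eq_encN: "u = encN w \<longleftrightarrow> decN u = w"
  by (metis decN_encN encN_decN)

lemma chA: "fN u = encN (A e n) \<longleftrightarrow> u = encN (A e (Suc n))"
  by (subst fN_eq) (simp add: preS_def eq_encN)

lemma chB: "\<not> Pc e n \<Longrightarrow> fN u = encN (B e n) \<longleftrightarrow> u = encN (B e (Suc n))"
  by (subst fN_eq) (simp add: preS_def eq_encN)

lemma preD0: "fN u = encN (D e 0) \<longleftrightarrow> u = encN (A e 0) \<or> u = encN (B e 0)"
  by (subst fN_eq) (auto simp: preS_def eq_encN)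

lemma fN_BSuc: "fN (encN (B e (Suc m))) = encN (B e m)"
  by (simp add: fN_eq preS_def)

lemma B_pow: "(fN ^^ k) (encN (B e (n + k))) = encN (B e n)"
proof (induction k)
  case 0 then show ?case by simp
next
  case (Suc k)
  have "(fN ^^ Suc k) (encN (B e (n + Suc k))) = (fN ^^ k) (fN (encN (B e (Suc (n + k)))))"
    by (simp only: funpow_Suc_right o_apply add_Suc_right)
  then show ?case using Suc by (simp add: fN_BSuc)
qed

lemma inj_gA: "inj (\<lambda>n. encN (A e n))" by (rule injI) simp
lemma inj_gB: "inj (\<lambda>n. encN (B e n))" by (rule injI) simp

lemma iso_no: assumes "\<not> (\<exists>n. Pc e n)" shows "iso_fun fN (encN (D e 0)) = 1"
proof -
  have "tree_iso fN ((\<lambda>n. encN (A e n)) 0) ((\<lambda>n. encN (B e n)) 0)"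
    by (rule chain_iso[where f=fN, OF chA _ inj_gA inj_gB]) (use assms chB in blast)
  then show ?thesis unfolding iso_fun_def
    by (intro if_P exI[of _ "encN (A e 0)"] exI[of _ "encN (B e 0)"]) (simp add: preD0)
qed

lemma iso_yes: assumes "Pc e n0" shows "iso_fun fN (encN (D e 0)) = 0"
proof -
  let ?b0 = "encN (B e 0)"
  let ?v = "encN (B e n0)"
  let ?p1 = "encN (B e (Suc n0))"
  let ?p2 = "encN (C e n0 0)"
  have fp2: "fN ?p2 = ?v" using assms by (simp add: fN_eq preS_def)
  have v: "?v \<in> tree_verts fN ?b0" unfolding tree_verts_def using B_pow[of n0 e 0] by auto
  have "(fN ^^ Suc n0) ?p1 = ?b0" using B_pow[of "Suc n0" e 0] by simp
  then have p1: "?p1 \<in> tree_verts fN ?b0" unfolding tree_verts_def by blast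
  have "(fN ^^ Suc n0) ?p2 = (fN ^^ n0) (fN ?p2)" by (simp only: funpow_Suc_right o_apply)
  then have "(fN ^^ Suc n0) ?p2 = ?b0" using fp2 B_pow[of n0 e 0] by simp
  then have p2: "?p2 \<in> tree_verts fN ?b0" unfolding tree_verts_def by blast
  have ni: "\<not> tree_iso fN ?b0 ((\<lambda>n. encN (A e n)) 0)" "\<not> tree_iso fN ((\<lambda>n. encN (A e n)) 0) ?b0"
    using nonchain[where f=fN and g="\<lambda>n. encN (A e n)", OF chA, of ?p1 ?p2 ?v ?b0] p1 p2 v fp2
    by (simp_all add: fN_BSuc)
  have "\<not> (\<exists>x1 x2. x1 \<noteq> x2 \<and> fN x1 = encN (D e 0) \<and> fN x2 = encN (D e 0) \<and> tree_iso fN x1 x2)"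
  proof
    assume "\<exists>x1 x2. x1 \<noteq> x2 \<and> fN x1 = encN (D e 0) \<and> fN x2 = encN (D e 0) \<and> tree_iso fN x1 x2"
    then obtain x1 x2 where "x1 \<noteq> x2" "fN x1 = encN (D e 0)" "fN x2 = encN (D e 0)" "tree_iso fN x1 x2" by blast
    then show False using ni unfolding preD0 by auto
  qed
  then show ?thesis unfolding iso_fun_def by simp
qed

lemma Pc_iff: "(\<exists>n. Pc (enc r) n) \<longleftrightarrow> eval r [xe (enc r)] 1"
proof
  assume "\<exists>n. Pc (enc r) n"
  then obtain n where "valid (list_decode n)" "cont (list_decode n) (enc r) (list_encode [xe (enc r)]) 1"
    unfolding Pc_def by blast
  then show "eval r [xe (enc r)] 1" by (rule sound)
next
  assume "eval r [xe (enc r)] 1"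
  then obtain L where "valid L" "cont L (enc r) (list_encode [xe (enc r)]) 1" using complete by blast
  then have "Pc (enc r) (list_encode L)" unfolding Pc_def by simp
  then show "\<exists>n. Pc (enc r) n" by blast
qed

theorem proposition3p2:
  shows "\<exists>f :: nat \<Rightarrow> nat. is_21_structure f \<and> computable1 f \<and> computable1 (branching f) \<and>
           \<not> (\<exists>r. \<forall>x\<in>Lambda f. eval r [x] (iso_fun f x))"
proof (intro exI[of _ fN] conjI is21 computable_fN computable_br notI)
  assume "\<exists>r. \<forall>x\<in>Lambda fN. eval r [x] (iso_fun fN x)"
  then obtain r where R: "\<forall>x\<in>Lambda fN. eval r [x] (iso_fun fN x)" by blast
  define e where "e = enc r"
  have xe: "xe e = encN (D e 0)" by (simp add: xe_def encN.simps)
  have "encN (D e 0) \<in> Lambda fN"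
    unfolding Lambda_def branching_def card_fN_vimage by (simp add: br_def)
  then have ev: "eval r [encN (D e 0)] (iso_fun fN (encN (D e 0)))" using R by blast
  show False
  proof (cases "\<exists>n. Pc e n")
    case True
    then obtain n0 where "Pc e n0" by blast
    then have "iso_fun fN (encN (D e 0)) = 0" by (rule iso_yes)
    then have 0: "eval r [encN (D e 0)] 0" using ev by simp
    have 1: "eval r [encN (D e 0)] 1" using True Pc_iff[of r] by (simp add: e_def xe[unfolded e_def])
    show False using eval_det[OF 0 1] by simp
  next
    case False
    then have "iso_fun fN (encN (D e 0)) = 1" by (rule iso_no)
    then have "eval r [encN (D e 0)] 1" using ev by simp
    then have "\<exists>n. Pc e n" using Pc_iff[of r] by (simp add: e_def xe[unfolded e_def])
    then show False using False by blast
  qed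
qed


end
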